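(* Let $P_0(X)= 32 X^6-48 X^4+18 X^2-1$ and, for $p=(p_0,\dots,p_4)\in\mathbb R^5$, $P_p(X)=P_0(X)+\sum_{j=0}^4 p_j X^j$. The critical points of $P_0$ are $(\zeta_{i,0})_{1\le i\le 5}=(-\sqrt3/2,-1/2,0,1/2,\sqrt3/2)$, all non-degenerate, with critical values $(a_{i,0})_{1\le i\le 5}=(-1,1,-1,1,-1)$, and $\beta_0=1$ is a repelling fixed point of $P_0$. For $p$ near $0$ let $\zeta_{i,p}$, $a_{i,p}=P_p(\zeta_{i,p})$ and $\beta_p$ be the continuations of the critical points, critical values and of the fixed point $\beta_0$ for $P_p$. Then \[ \det\big[\partial_{p_j} (P_p(a_{i, p}))-\partial_{p_j} \beta_p \big]_{1\le i\le 5,\,0\le j\le 4} \neq 0 \quad \text{at } p=0 .\] *)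

theory Defs
  imports "HOL-Analysis.Analysis" "HOL-Library.Numeral_Type"
begin

definition P0 :: "real \<Rightarrow> real" where
  "P0 x = 32 * x ^ 6 - 48 * x ^ 4 + 18 * x ^ 2 - 1"

definition Pp :: "real ^ 5 \<Rightarrow> real \<Rightarrow> real" where
  "Pp p x = P0 x + (\<Sum>k<5. p $ (of_nat k) * x ^ k)"

text \<open>Critical points of P_0 in increasing order: row index 0..4 of type 5
  corresponds to i = 1..5 in the paper.\<close>
definition zeta0 :: "5 \<Rightarrow> real" where
  "zeta0 i = (if i = 0 then - sqrt 3 / 2 else if i = 1 then - 1 / 2 else if i = 2 then 0
              else if i = 3 then 1 / 2 else sqrt 3 / 2)"

end

theory Submission imports Defs begin
lemma U5: "(UNIV :: 5 set) = {0,1,2,3,4}"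
proof -
  have "card {0,1,2,3::5,4} = 5" by simp
  then have "{0,1,2,3::5,4} = UNIV" by (intro card_subset_eq) auto
  then show ?thesis by simp
qed

definition P0d :: "real \<Rightarrow> real" where "P0d x = 192*x^5 - 192*x^3 + 36*x"

lemma vec_nth_deriv: "((\<lambda>p::real^5. p $ k) has_derivative (\<lambda>h. h $ k)) F"
  by (rule bounded_linear_imp_has_derivative[OF bounded_linear_vec_nth])

lemma Pp_deriv:
  assumes "(g has_derivative G) (at 0)"
  shows "((\<lambda>p. Pp p (g p)) has_derivative
           (\<lambda>h. P0d (g 0) * G h + (\<Sum>k<5. h $ of_nat k * g 0 ^ k))) (at 0)"
proof -
  have "((\<lambda>p. Pp p (g p)) has_derivative
           (\<lambda>h. P0d (g 0) * G h + (\<Sum>k<5. h $ of_nat k * g 0 ^ k + 0 $ of_nat k * (of_nat k * G h * g 0 ^ (k - 1))))) (at 0)"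
    unfolding Pp_def P0_def P0d_def
    apply (rule derivative_eq_intros assms vec_nth_deriv refl)+
    apply (simp add: algebra_simps fun_eq_iff)
    done
  then show ?thesis by simp
qed

lemma sum5: "(\<Sum>k<(5::nat). f k) = f 0 + f 1 + f 2 + f 3 + (f 4 :: real)"
  by (simp add: eval_nat_numeral)

lemma Pp0: "Pp 0 x = P0 x" by (simp add: Pp_def)

lemma sq3: "sqrt 3 ^ 2 = 3" "sqrt 3 ^ 3 = 3 * sqrt 3" "sqrt 3 ^ 4 = 9" "sqrt 3 ^ 5 = 9 * sqrt 3"
     "sqrt 3 ^ 6 = 27"
proof -
  have s: "sqrt 3 * sqrt 3 = 3" by simp
  show "sqrt 3 ^ 2 = 3" by simp
  show "sqrt 3 ^ 3 = 3 * sqrt 3" by (simp add: power3_eq_cube s)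
  show "sqrt 3 ^ 4 = 9" using s by (simp add: eval_nat_numeral s mult.assoc[symmetric])
  show "sqrt 3 ^ 5 = 9 * sqrt 3" using s by (simp add: eval_nat_numeral s mult.assoc[symmetric])
  show "sqrt 3 ^ 6 = 27" using s by (simp add: eval_nat_numeral s mult.assoc[symmetric])
qed

lemma P0d_zeta0: "P0d (zeta0 i) = 0"
  unfolding P0d_def zeta0_def by (simp add: power_divide sq3)
lemma of5: "(of_nat 0 :: 5) = 0" "(of_nat 1 :: 5) = 1" "(of_nat 2 :: 5) = 2" "(of_nat 3 :: 5) = 3" "(of_nat 4 :: 5) = 4"
  by simp_all

lemma ne5: "(0::5) \<noteq> 1" "(0::5) \<noteq> 2" "(0::5) \<noteq> 3" "(0::5) \<noteq> 4"
  "(1::5) \<noteq> 0" "(1::5) \<noteq> 2" "(1::5) \<noteq> 3" "(1::5) \<noteq> 4"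
  "(2::5) \<noteq> 0" "(2::5) \<noteq> 1" "(2::5) \<noteq> 3" "(2::5) \<noteq> 4"
  "(3::5) \<noteq> 0" "(3::5) \<noteq> 1" "(3::5) \<noteq> 2" "(3::5) \<noteq> 4"
  "(4::5) \<noteq> 0" "(4::5) \<noteq> 1" "(4::5) \<noteq> 2" "(4::5) \<noteq> 3"
  by simp_all

lemma axn: "axis (j::5) (1::real) $ i = (if i = j then 1 else 0)"
  by (simp add: axis_def)

lemma axs: "(\<Sum>k<(5::nat). axis (0::5) 1 $ of_nat k * f k) = f 0"
  "(\<Sum>k<(5::nat). axis (1::5) 1 $ of_nat k * f k) = f 1"
  "(\<Sum>k<(5::nat). axis (2::5) 1 $ of_nat k * f k) = f 2"
  "(\<Sum>k<(5::nat). axis (3::5) 1 $ of_nat k * f k) = f 3"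
  "(\<Sum>k<(5::nat). axis (4::5) 1 $ of_nat k * f k) = (f 4 :: real)"
  by (simp_all only: sum5 axn of5 ne5 simp_thms if_True if_False mult_1_left mult_zero_left add_0_left add_0_right)

lemma axs1: "(\<Sum>k<(5::nat). axis (j::5) 1 $ of_nat k) = (1::real)"
proof -
  have "\<forall>j\<in>{0,1,2,3::5,4}. (\<Sum>k<(5::nat). axis j 1 $ of_nat k * (1::real)) = 1"
    using axs[of "\<lambda>_. 1"] by (simp only: ball_simps simp_thms)
  moreover have "j \<in> {0,1,2,3::5,4}" using U5 by blast
  ultimately have "(\<Sum>k<(5::nat). axis j 1 $ of_nat k * (1::real)) = 1" by blast
  then show ?thesis by (simp only: mult_1_right)
qed

lemma sumU5: "(\<Sum>j\<in>(UNIV::5 set). g j) = g 0 + g 1 + g 2 + g 3 + (g 4 :: real)"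
proof -
  have "(\<Sum>j\<in>(UNIV::5 set). g j) = (\<Sum>j\<in>{0,1,2,3,4}. g j)" by (simp only: U5)
  also have "\<dots> = g 0 + (g 1 + (g 2 + (g 3 + (g 4 + 0))))"
    by (simp only: sum.insert finite.intros finite.emptyI insert_iff empty_iff ne5 simp_thms sum.empty)
  finally show ?thesis by (simp only: add.assoc add_0_right)
qed

lemma zv: "zeta0 0 = - sqrt 3 / 2" "zeta0 1 = - 1/2" "zeta0 2 = 0" "zeta0 3 = 1/2" "zeta0 4 = sqrt 3 / 2"
  by (simp_all add: zeta0_def)

lemma av: "P0 (- sqrt 3 / 2) = -1" "P0 (- 1/2) = 1" "P0 0 = -1" "P0 (1/2) = 1" "P0 (sqrt 3 / 2) = -1"
  by (simp_all add: P0_def power_divide sq3)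

lemma dv: "P0d 1 = 36" "P0d (-1) = -36" by (simp_all add: P0d_def)

lemma ker:
  fixes M :: "real^5^5"
  assumes "\<And>i j. M $ i $ j = P0d (P0 (zeta0 i)) * (\<Sum>k<5. axis j 1 $ of_nat k * zeta0 i ^ k)
     + (\<Sum>k<5. axis j 1 $ of_nat k * P0 (zeta0 i) ^ k) + (\<Sum>k<5. axis j 1 $ of_nat k) / 35"
  shows "det M \<noteq> 0"
proof -
  have "x = 0" if "M *v x = 0" for x
  proof -
    have e: "\<And>i. (\<Sum>j\<in>UNIV. M $ i $ j * x $ j) = 0" using that
      by (simp add: matrix_vector_mult_def vec_eq_iff)
    have "\<And>i. (\<Sum>j\<in>UNIV. M $ i $ j * x $ j) = (P0d (P0 (zeta0 i)) + P0 (zeta0 i) ^ 0 + 1/35) * x$0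
       + (P0d (P0 (zeta0 i)) * zeta0 i + P0 (zeta0 i) + 1/35) * x$1
       + (P0d (P0 (zeta0 i)) * zeta0 i ^ 2 + P0 (zeta0 i) ^ 2 + 1/35) * x$2
       + (P0d (P0 (zeta0 i)) * zeta0 i ^ 3 + P0 (zeta0 i) ^ 3 + 1/35) * x$3
       + (P0d (P0 (zeta0 i)) * zeta0 i ^ 4 + P0 (zeta0 i) ^ 4 + 1/35) * x$4"
      by (simp only: sumU5 assms axs axs1) (simp add: algebra_simps)
    then have ee: "\<And>i. (P0d (P0 (zeta0 i)) + P0 (zeta0 i) ^ 0 + 1/35) * x$0
       + (P0d (P0 (zeta0 i)) * zeta0 i + P0 (zeta0 i) + 1/35) * x$1
       + (P0d (P0 (zeta0 i)) * zeta0 i ^ 2 + P0 (zeta0 i) ^ 2 + 1/35) * x$2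
       + (P0d (P0 (zeta0 i)) * zeta0 i ^ 3 + P0 (zeta0 i) ^ 3 + 1/35) * x$3
       + (P0d (P0 (zeta0 i)) * zeta0 i ^ 4 + P0 (zeta0 i) ^ 4 + 1/35) * x$4 = 0"
      using e by simp
    have r0: "(-36 + 1 + 1/35) * x$0 + (18 * sqrt 3 - 1 + 1/35) * x$1
       + (-27 + 1 + 1/35) * x$2 + (27 * sqrt 3 / 2 - 1 + 1/35) * x$3
       + (-81/4 + 1 + 1/35) * x$4 = 0"
      using ee[of 0] unfolding zv av dv by (simp add:  power_divide sq3)
    have r4: "(-36 + 1 + 1/35) * x$0 + (-18 * sqrt 3 - 1 + 1/35) * x$1
       + (-27 + 1 + 1/35) * x$2 + (-27 * sqrt 3 / 2 - 1 + 1/35) * x$3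
       + (-81/4 + 1 + 1/35) * x$4 = 0"
      using ee[of 4] unfolding zv av dv by (simp add:  power_divide sq3)
    have r1: "(36 + 1 + 1/35) * x$0 + (-18 + 1 + 1/35) * x$1
       + (9 + 1 + 1/35) * x$2 + (-9/2 + 1 + 1/35) * x$3
       + (9/4 + 1 + 1/35) * x$4 = 0"
      using ee[of 1] unfolding zv av dv by (simp add:  power_divide)
    have r3: "(36 + 1 + 1/35) * x$0 + (18 + 1 + 1/35) * x$1
       + (9 + 1 + 1/35) * x$2 + (9/2 + 1 + 1/35) * x$3
       + (9/4 + 1 + 1/35) * x$4 = 0"
      using ee[of 3] unfolding zv av dv by (simp add:  power_divide)
    have r2: "(-36 + 1 + 1/35) * x$0 + (- 1 + 1/35) * x$1
       + (1 + 1/35) * x$2 + (- 1 + 1/35) * x$3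
       + (1 + 1/35) * x$4 = 0"
      using ee[of 2] unfolding zv av dv by (simp add: )
    have "sqrt 3 * (4 * x$1 + 3 * x$3) = 0" using r0 r4 by (simp add: algebra_simps)
    then have h: "4 * x$1 + 3 * x$3 = 0" by simp
    have r04: "(-36 + 1 + 1/35) * x$0 + (- 1 + 1/35) * x$1
       + (-27 + 1 + 1/35) * x$2 + (- 1 + 1/35) * x$3
       + (-81/4 + 1 + 1/35) * x$4 = 0" using r0 r4 by (simp add: algebra_simps)
    have ir04: "(-4896) * x$0 + (-136) * x$1 + (-3636) * x$2 + (-136) * x$3 + (-2691) * x$4 = 0" using r04 by (simp only: ring_distribs, (linarith)?)
    have ir1: "(5184) * x$0 + (-2376) * x$1 + (1404) * x$2 + (-486) * x$3 + (459) * x$4 = 0" using r1 by (simp only: ring_distribs, (linarith)?)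
    have ir2: "(-4896) * x$0 + (-136) * x$1 + (144) * x$2 + (-136) * x$3 + (144) * x$4 = 0" using r2 by (simp only: ring_distribs, (linarith)?)
    have ir3: "(5184) * x$0 + (2664) * x$1 + (1404) * x$2 + (774) * x$3 + (459) * x$4 = 0" using r3 by (simp only: ring_distribs, (linarith)?)
    have "x$0 = 0 \<and> x$1 = 0 \<and> x$2 = 0 \<and> x$3 = 0 \<and> x$4 = 0"
      using h ir04 ir1 ir2 ir3 by (intro conjI; linarith)
    then have "\<forall>i\<in>{0,1,2,3,4}. x$i = 0" by auto
    then have "\<forall>i\<in>UNIV. x$i = 0" by (simp only: U5)
    then show ?thesis by (simp add: vec_eq_iff)
  qed
  then have "\<exists>B::real^5^5. B ** M = mat 1"
    by (simp only: matrix_left_invertible_ker) blast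
  then have "invertible M" by (simp only: invertible_left_inverse)
  then show ?thesis by (simp add: invertible_det_nz)
qed

theorem lemma2p12:
  fixes \<zeta> :: "5 \<Rightarrow> real ^ 5 \<Rightarrow> real" and \<beta> :: "real ^ 5 \<Rightarrow> real"
  assumes "\<And>i. \<zeta> i 0 = zeta0 i"
    and "\<beta> 0 = 1"
    and "\<And>i. \<zeta> i differentiable (at 0)"
    and "\<beta> differentiable (at 0)"
    and "\<forall>\<^sub>F p in nhds 0. (\<forall>i. deriv (Pp p) (\<zeta> i p) = 0) \<and> Pp p (\<beta> p) = \<beta> p"
  shows "det (\<chi> i j. frechet_derivative (\<lambda>p. Pp p (Pp p (\<zeta> i p)) - \<beta> p) (at 0) (axis j 1))
           \<noteq> 0"
proof -
  define Z where "Z i = frechet_derivative (\<zeta> i) (at 0)" for i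
  define B where "B = frechet_derivative \<beta> (at 0)"
  have Z: "(\<zeta> i has_derivative Z i) (at 0)" for i
    using assms(3) unfolding Z_def frechet_derivative_works .
  have B: "(\<beta> has_derivative B) (at 0)"
    using assms(4) unfolding B_def frechet_derivative_works .
  have Bv: "B h = - (\<Sum>k<5. h $ of_nat k) / 35" for h
  proof -
    have d1: "((\<lambda>p. Pp p (\<beta> p) - \<beta> p) has_derivative
       (\<lambda>h. P0d (\<beta> 0) * B h + (\<Sum>k<5. h $ of_nat k * \<beta> 0 ^ k) - B h)) (at 0)"
      by (intro has_derivative_diff Pp_deriv B)
    have "\<forall>\<^sub>F p in nhds 0. Pp p (\<beta> p) - \<beta> p = 0"
      using assms(5) by (rule eventually_mono) simp
    then have ev: "\<forall>\<^sub>F p in at 0. Pp p (\<beta> p) - \<beta> p = 0"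
      unfolding eventually_at_filter by (rule eventually_mono) simp
    have "((\<lambda>p. 0) has_derivative
       (\<lambda>h. P0d (\<beta> 0) * B h + (\<Sum>k<5. h $ of_nat k * \<beta> 0 ^ k) - B h)) (at 0)"
      by (rule has_derivative_transform_eventually[OF d1 ev]) (simp_all add: assms(2) Pp0 P0_def)
    then have "(\<lambda>h. P0d (\<beta> 0) * B h + (\<Sum>k<5. h $ of_nat k * \<beta> 0 ^ k) - B h) = (\<lambda>h. 0)"
      by (rule has_derivative_unique) (rule has_derivative_const)
    then have "P0d (\<beta> 0) * B h + (\<Sum>k<5. h $ of_nat k * \<beta> 0 ^ k) - B h = 0"
      by (rule fun_cong)
    then have "36 * B h + (\<Sum>k<5. h $ of_nat k) - B h = 0"
      unfolding assms(2) dv by simp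
    then show ?thesis by linarith
  qed
  have F: "((\<lambda>p. Pp p (Pp p (\<zeta> i p)) - \<beta> p) has_derivative
     (\<lambda>h. P0d (Pp 0 (\<zeta> i 0)) * (P0d (\<zeta> i 0) * Z i h + (\<Sum>k<5. h $ of_nat k * \<zeta> i 0 ^ k))
        + (\<Sum>k<5. h $ of_nat k * Pp 0 (\<zeta> i 0) ^ k) - B h)) (at 0)" for i
    by (intro has_derivative_diff Pp_deriv Z B)
  show ?thesis
  proof (rule ker)
    fix i j
    show "(\<chi> i j. frechet_derivative (\<lambda>p. Pp p (Pp p (\<zeta> i p)) - \<beta> p) (at 0) (axis j 1)) $ i $ j =
      P0d (P0 (zeta0 i)) * (\<Sum>k<5. axis j 1 $ of_nat k * zeta0 i ^ k)
     + (\<Sum>k<5. axis j 1 $ of_nat k * P0 (zeta0 i) ^ k) + (\<Sum>k<5. axis j 1 $ of_nat k) / 35"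
      unfolding frechet_derivative_at[OF F, symmetric]
      apply (simp only: vec_lambda_beta)
      apply (simp only: assms(1))
      apply (simp only: Pp0)
      apply (simp only: P0d_zeta0)
      apply (simp only: Bv)
      apply (simp only: axs1)
      apply (simp only: mult_zero_left add_0_left)
      done
  qed
qed
end
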